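(* Let $n,k,\delta$ be positive integers with $k<n$ and $(n-k)\mid\delta$, and set $M=\max\{n-k,k\}$ and $L=\lfloor \delta/k\rfloor+\delta/(n-k)$. Let $\mathbb{F}$ be a finite field of characteristic $p$ and let $\alpha$ be a primitive element of $\mathbb{F}$. For $\ell=0,1,\dots,L$ let $T_\ell\in\mathbb{F}^{M\times M}$ be the matrix whose $(i,j)$ entry ($1\le i,j\le M$) is $$(T_\ell)_{ij}=\alpha^{2^{M\ell+(i-1)+(j-1)}},$$ and let $\mathcal{T}(T_0,\dots,T_L)\in\mathbb{F}^{(L+1)M\times(L+1)M}$ be the lower block triangular block Toeplitz matrix $$\mathcal{T}(T_0,\dots,T_L)=\begin{pmatrix} T_0 & 0 & \cdots & 0\\ T_1 & T_0 & \cdots & 0\\ \vdots & \vdots & \ddots & \vdots\\ T_L & T_{L-1} & \cdots & T_0\end{pmatrix}.$$ If $|\mathbb{F}|\ge p^{\left(2^{M(L+2)-1}\right)}$, then $\mathcal{T}(T_0,\dots,T_L)$ is superregular over $\mathbb{F}$.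
   Context: For a square matrix $A=[\mu_{ij}]$ of order $m$, $|A|=\sum_{\sigma\in S_m}(-1)^{\mathrm{sgn}(\sigma)}\mu_{1\sigma(1)}\cdots\mu_{m\sigma(m)}$; a term $\mu_{1\sigma(1)}\cdots\mu_{m\sigma(m)}$ is called trivial if $\mu_{i\sigma(i)}=0$ for some $i$. If $A$ is a square submatrix of a matrix $B$ and all terms of the determinant of $A$ are trivial, then $|A|$ is called a trivial minor of $B$. A matrix $B$ is called superregular if all its non-trivial minors are nonzero. *)

theory Defs
  imports "Jordan_Normal_Form.Determinant" "Jordan_Normal_Form.DL_Submatrix"
begin

definition trivial_minor :: "'a::comm_ring_1 mat \<Rightarrow> bool" where
  "trivial_minor S \<longleftrightarrow>
     (\<forall>\<sigma>. \<sigma> permutes {0..<dim_row S} \<longrightarrow> (\<exists>i<dim_row S. S $$ (i, \<sigma> i) = 0))"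

definition superregular :: "'a::comm_ring_1 mat \<Rightarrow> bool" where
  "superregular B \<longleftrightarrow>
     (\<forall>I J. I \<subseteq> {0..<dim_row B} \<longrightarrow> J \<subseteq> {0..<dim_col B} \<longrightarrow> card I = card J \<longrightarrow>
        \<not> trivial_minor (submatrix B I J) \<longrightarrow> det (submatrix B I J) \<noteq> 0)"

definition primitive_element :: "'a::field \<Rightarrow> bool" where
  "primitive_element \<alpha> \<longleftrightarrow> (\<forall>x. x \<noteq> 0 \<longrightarrow> (\<exists>e::nat. x = \<alpha> ^ e))"

definition T_block :: "'a::field \<Rightarrow> nat \<Rightarrow> nat \<Rightarrow> 'a mat" where
  "T_block \<alpha> M l = mat M M (\<lambda>(i,j). \<alpha> ^ (2 ^ (M * l + i + j)))"

definition block_toeplitz :: "(nat \<Rightarrow> 'a::zero mat) \<Rightarrow> nat \<Rightarrow> nat \<Rightarrow> 'a mat" where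
  "block_toeplitz T M L = mat ((L+1)*M) ((L+1)*M)
     (\<lambda>(r,c). if c div M \<le> r div M then T (r div M - c div M) $$ (r mod M, c mod M) else 0)"

end

theory Submission
  imports Defs
begin



lemma inv_free_unique_aux:
  fixes y t :: "nat \<Rightarrow> int"
  assumes ps: "\<sigma> permutes {0..<m}" and pt: "\<tau> permutes {0..<m}"
    and vs: "\<forall>i<m. t i \<le> y (\<sigma> i)" and vt: "\<forall>i<m. t i \<le> y (\<tau> i)"
    and fs: "\<forall>i i'. i < i' \<and> i' < m \<and> y (\<sigma> i') < y (\<sigma> i) \<longrightarrow> y (\<sigma> i') < t i"
    and ft: "\<forall>i i'. i < i' \<and> i' < m \<and> y (\<tau> i') < y (\<tau> i) \<longrightarrow> y (\<tau> i') < t i"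
    and yinj: "inj_on y {0..<m}"
    and iD: "i < m" "\<sigma> i \<noteq> \<tau> i"
    and minS: "\<forall>j<m. \<sigma> j \<noteq> \<tau> j \<longrightarrow> y (\<sigma> i) \<le> y (\<sigma> j)"
    and minT: "\<forall>j<m. \<sigma> j \<noteq> \<tau> j \<longrightarrow> y (\<sigma> i) \<le> y (\<tau> j)"
  shows False
proof -
  let ?c = "\<sigma> i"
  have cm: "?c < m" using ps iD(1) by (metis atLeastLessThan_iff permutes_in_image zero_le)
  obtain i' where i': "i' < m" "\<tau> i' = ?c"
    using pt cm by (metis atLeastLessThan_iff permutes_def zero_le permutes_in_image)
  have ii': "i' \<noteq> i" using iD i' by auto
  have i'D: "\<sigma> i' \<noteq> \<tau> i'"
    using i' ii' ps iD(1) by (metis permutes_inj inj_eq)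
  show False
  proof (cases "i < i'")
    case True
    let ?d = "\<tau> i"
    have dm: "?d < m" using pt iD(1) by (metis atLeastLessThan_iff permutes_in_image zero_le)
    have "y ?c \<le> y ?d" using minT iD by auto
    moreover have "y ?c \<noteq> y ?d" using yinj cm dm iD(2) by (metis atLeastLessThan_iff inj_on_eq_iff zero_le)
    ultimately have "y (\<tau> i') < y (\<tau> i)" using i' by auto
    then have "y (\<tau> i') < t i" using ft True i' by blast
    moreover have "t i \<le> y ?c" using vs iD by auto
    ultimately show False using i' by auto
  next
    case False
    then have lt: "i' < i" using ii' by auto
    let ?d = "\<sigma> i'"
    have dm: "?d < m" using ps i'(1) by (metis atLeastLessThan_iff permutes_in_image zero_le)
    have "y ?c \<le> y ?d" using minS i'D i' by auto
    moreover have "?d \<noteq> ?c" using ps i' ii' by (metis permutes_inj inj_eq)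
    then have "y ?c \<noteq> y ?d" using yinj cm dm by (metis atLeastLessThan_iff inj_on_eq_iff zero_le)
    ultimately have "y (\<sigma> i) < y (\<sigma> i')" by auto
    then have "y (\<sigma> i) < t i'" using fs lt iD(1) by blast
    moreover have "t i' \<le> y (\<tau> i')" using vt i' by auto
    ultimately show False using i' by auto
  qed
qed

lemma inv_free_unique:
  fixes y t :: "nat \<Rightarrow> int"
  assumes ps: "\<sigma> permutes {0..<m}" and pt: "\<tau> permutes {0..<m}"
    and vs: "\<forall>i<m. t i \<le> y (\<sigma> i)" and vt: "\<forall>i<m. t i \<le> y (\<tau> i)"
    and fs: "\<forall>i i'. i < i' \<and> i' < m \<and> y (\<sigma> i') < y (\<sigma> i) \<longrightarrow> y (\<sigma> i') < t i"
    and ft: "\<forall>i i'. i < i' \<and> i' < m \<and> y (\<tau> i') < y (\<tau> i) \<longrightarrow> y (\<tau> i') < t i"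
    and yinj: "inj_on y {0..<m}"
  shows "\<sigma> = \<tau>"
proof (rule ccontr)
  assume ne: "\<sigma> \<noteq> \<tau>"
  define D where "D = {j. j < m \<and> \<sigma> j \<noteq> \<tau> j}"
  have "D \<noteq> {}"
  proof
    assume "D = {}"
    have "\<sigma> j = \<tau> j" for j
    proof (cases "j < m")
      case True then show ?thesis using \<open>D = {}\<close> unfolding D_def by blast
    next
      case False then show ?thesis using ps pt by (simp add: permutes_not_in)
    qed
    then have "\<forall>j. \<sigma> j = \<tau> j" by blast
    then show False using ne by auto
  qed
  have fD: "finite D" unfolding D_def by auto
  define Y where "Y = (\<lambda>j. y (\<sigma> j)) ` D \<union> (\<lambda>j. y (\<tau> j)) ` D"
  have "finite Y" "Y \<noteq> {}" using fD \<open>D \<noteq> {}\<close> unfolding Y_def by auto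
  then have mY: "Min Y \<in> Y" and mle: "\<forall>z\<in>Y. Min Y \<le> z" by auto
  show False
  proof (cases "Min Y \<in> (\<lambda>j. y (\<sigma> j)) ` D")
    case True
    then obtain i where i: "i \<in> D" "Min Y = y (\<sigma> i)" by auto
    show False
    proof (rule inv_free_unique_aux[OF ps pt vs vt fs ft yinj, of i])
      show "i < m" "\<sigma> i \<noteq> \<tau> i" using i unfolding D_def by auto
      show "\<forall>j<m. \<sigma> j \<noteq> \<tau> j \<longrightarrow> y (\<sigma> i) \<le> y (\<sigma> j)"
        using mle i unfolding Y_def D_def by (simp del: Min_le_iff)
      show "\<forall>j<m. \<sigma> j \<noteq> \<tau> j \<longrightarrow> y (\<sigma> i) \<le> y (\<tau> j)"
        using mle i unfolding Y_def D_def by (simp del: Min_le_iff)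
    qed
  next
    case False
    then obtain i where i: "i \<in> D" "Min Y = y (\<tau> i)" using mY unfolding Y_def by auto
    show False
    proof (rule inv_free_unique_aux[OF pt ps vt vs ft fs yinj, of i])
      show "i < m" "\<tau> i \<noteq> \<sigma> i" using i unfolding D_def by auto
      show "\<forall>j<m. \<tau> j \<noteq> \<sigma> j \<longrightarrow> y (\<tau> i) \<le> y (\<tau> j)"
        using mle i unfolding Y_def D_def by (simp del: Min_le_iff)
      show "\<forall>j<m. \<tau> j \<noteq> \<sigma> j \<longrightarrow> y (\<tau> i) \<le> y (\<sigma> j)"
        using mle i unfolding Y_def D_def by (simp del: Min_le_iff)
    qed
  qed
qed

lemma sum_swap_two:
  fixes g h :: "nat \<Rightarrow> nat"
  assumes "i \<in> A" "i' \<in> A" "i \<noteq> i'" "finite A" "\<forall>k\<in>A. k \<noteq> i \<and> k \<noteq> i' \<longrightarrow> g k = h k"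
  shows "sum g A + h i + h i' = sum h A + g i + g i'"
proof -
  have i'A: "i' \<in> A - {i}" using assms by auto
  have "sum g A = g i + (g i' + sum g (A - {i} - {i'}))"
    using sum.remove[OF assms(4) assms(1), of g] sum.remove[of "A - {i}" i' g] i'A assms(4) by simp
  moreover have "sum h A = h i + (h i' + sum h (A - {i} - {i'}))"
    using sum.remove[OF assms(4) assms(1), of h] sum.remove[of "A - {i}" i' h] i'A assms(4) by simp
  moreover have "sum g (A - {i} - {i'}) = sum h (A - {i} - {i'})"
    using assms(5) by (intro sum.cong) auto
  ultimately show ?thesis by simp
qed

lemma unique_max_perm:
  fixes y t :: "nat \<Rightarrow> int" and w :: "nat \<Rightarrow> nat \<Rightarrow> nat"
  assumes yinj: "inj_on y {0..<m}"
  and swap: "\<And>i i' j j'. i < i' \<Longrightarrow> i' < m \<Longrightarrow> j < m \<Longrightarrow> j' < m \<Longrightarrow> y j' < y j \<Longrightarrow> t i \<le> y j' \<Longrightarrow> t i' \<le> y j'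
       \<Longrightarrow> w i j + w i' j' < w i j' + w i' j"
  and ex0: "\<sigma>0 permutes {0..<m}" "\<forall>i<m. t i \<le> y (\<sigma>0 i)"
  shows "\<exists>\<sigma>. \<sigma> permutes {0..<m} \<and> (\<forall>i<m. t i \<le> y (\<sigma> i)) \<and>
     (\<forall>\<tau>. \<tau> permutes {0..<m} \<and> (\<forall>i<m. t i \<le> y (\<tau> i)) \<and> \<tau> \<noteq> \<sigma> \<longrightarrow>
         (\<Sum>i=0..<m. w i (\<tau> i)) < (\<Sum>i=0..<m. w i (\<sigma> i)))"
proof -
  define V where "V = {\<sigma>. \<sigma> permutes {0..<m} \<and> (\<forall>i<m. t i \<le> y (\<sigma> i))}"
  define E where "E = (\<lambda>\<sigma>. (\<Sum>i=0..<m. w i (\<sigma> i)))"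
  have fV: "finite V" unfolding V_def
    by (rule finite_subset[OF _ finite_permutations[of "{0..<m}"]]) auto
  have neV: "V \<noteq> {}" using ex0 unfolding V_def by auto
  have invfree: "\<forall>i i'. i < i' \<and> i' < m \<and> y (\<sigma> i') < y (\<sigma> i) \<longrightarrow> y (\<sigma> i') < t i"
    if sV: "\<sigma> \<in> V" and smax: "\<forall>\<tau>\<in>V. E \<tau> \<le> E \<sigma>" for \<sigma>
  proof (rule ccontr)
    assume "\<not> ?thesis"
    then obtain i i' where ii: "i < i'" "i' < m" "y (\<sigma> i') < y (\<sigma> i)" "t i \<le> y (\<sigma> i')"
      by (auto simp: not_less)
    have ps: "\<sigma> permutes {0..<m}" and vs: "\<forall>i<m. t i \<le> y (\<sigma> i)" using sV unfolding V_def by auto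
    define \<tau> where "\<tau> = \<sigma> \<circ> Transposition.transpose i i'"
    have tp: "\<tau> permutes {0..<m}" unfolding \<tau>_def
      using ii by (intro permutes_compose[OF _ ps] permutes_swap_id) auto
    have ti: "\<tau> i = \<sigma> i'" and ti': "\<tau> i' = \<sigma> i" unfolding \<tau>_def by auto
    have tk: "\<tau> k = \<sigma> k" if "k \<noteq> i" "k \<noteq> i'" for k unfolding \<tau>_def using that by auto
    have "\<forall>k<m. t k \<le> y (\<tau> k)"
    proof (intro allI impI)
      fix k assume k: "k < m"
      show "t k \<le> y (\<tau> k)"
      proof (cases "k = i")
        case True then show ?thesis using ti ii by simp
      next
        case False
        show ?thesis
        proof (cases "k = i'")
          case True
          have "t i' \<le> y (\<sigma> i')" using vs ii(2) by blast
          then show ?thesis using ti' ii(3) True by simp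
        next
          case False2: False
          then show ?thesis using tk[OF False False2] vs k by simp
        qed
      qed
    qed
    then have tV: "\<tau> \<in> V" using tp unfolding V_def by auto
    have im: "\<sigma> i < m" "\<sigma> i' < m" using ps ii by (auto simp: permutes_in_image)
    have lt: "w i (\<sigma> i) + w i' (\<sigma> i') < w i (\<sigma> i') + w i' (\<sigma> i)"
    proof (rule swap[OF ii(1) ii(2) im(1) im(2) ii(3) ii(4)])
      show "t i' \<le> y (\<sigma> i')" using vs ii(2) by blast
    qed
    have "E \<sigma> + w i (\<tau> i) + w i' (\<tau> i') = E \<tau> + w i (\<sigma> i) + w i' (\<sigma> i')"
      unfolding E_def using ii tk by (intro sum_swap_two) auto
    then have "E \<sigma> < E \<tau>" using lt ti ti' by simp
    moreover have "E \<tau> \<le> E \<sigma>" using smax tV by blast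
    ultimately show False by simp
  qed
  have "Max (E ` V) \<in> E ` V" using fV neV by (intro Max_in) auto
  then obtain \<sigma> where sV: "\<sigma> \<in> V" and sE: "E \<sigma> = Max (E ` V)"
    by (metis imageE)
  have smax: "\<forall>\<tau>\<in>V. E \<tau> \<le> E \<sigma>" using sE fV by simp
  show ?thesis
  proof (rule exI[of _ \<sigma>], intro conjI)
    show "\<sigma> permutes {0..<m}" "\<forall>i<m. t i \<le> y (\<sigma> i)" using sV unfolding V_def by auto
    show "\<forall>\<tau>. \<tau> permutes {0..<m} \<and> (\<forall>i<m. t i \<le> y (\<tau> i)) \<and> \<tau> \<noteq> \<sigma> \<longrightarrow> (\<Sum>i=0..<m. w i (\<tau> i)) < (\<Sum>i=0..<m. w i (\<sigma> i))"
    proof (intro allI impI)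
    fix \<tau> assume h: "\<tau> permutes {0..<m} \<and> (\<forall>i<m. t i \<le> y (\<tau> i)) \<and> \<tau> \<noteq> \<sigma>"
    then have tV: "\<tau> \<in> V" unfolding V_def by auto
    have le: "E \<tau> \<le> E \<sigma>" using smax tV by auto
    show "(\<Sum>i=0..<m. w i (\<tau> i)) < (\<Sum>i=0..<m. w i (\<sigma> i))"
    proof (rule ccontr)
      assume "\<not> ?thesis"
      then have eq: "E \<tau> = E \<sigma>" using le unfolding E_def by simp
      have tmax: "\<forall>\<rho>\<in>V. E \<rho> \<le> E \<tau>" using smax eq by simp
      have "\<sigma> = \<tau>"
        using inv_free_unique[of \<sigma> m \<tau> t y] sV tV invfree[OF sV smax] invfree[OF tV tmax] yinj
        unfolding V_def by blast
      then show False using h by simp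
    qed
    qed
  qed
qed




definition spanA :: "'a::field \<Rightarrow> nat \<Rightarrow> 'a set" where
  "spanA \<alpha> D = {x. \<exists>c::nat\<Rightarrow>int. x = (\<Sum>i<D. of_int (c i) * \<alpha>^i)}"

lemma spanA_0: "0 \<in> spanA \<alpha> D"
  unfolding spanA_def by (rule CollectI, rule exI[of _ "\<lambda>_. 0"]) simp

lemma spanA_add: "x \<in> spanA \<alpha> D \<Longrightarrow> z \<in> spanA \<alpha> D \<Longrightarrow> x + z \<in> spanA \<alpha> D"
  unfolding spanA_def
proof (clarify)
  fix c c' :: "nat \<Rightarrow> int"
  show "\<exists>c''. (\<Sum>i<D. of_int (c i) * \<alpha> ^ i) + (\<Sum>i<D. of_int (c' i) * \<alpha> ^ i) = (\<Sum>i<D. of_int (c'' i) * \<alpha> ^ i)"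
    by (rule exI[of _ "\<lambda>i. c i + c' i"]) (simp add: sum.distrib distrib_right)
qed

lemma spanA_smult: "x \<in> spanA \<alpha> D \<Longrightarrow> of_int z * x \<in> spanA \<alpha> D"
  unfolding spanA_def
proof (clarify)
  fix c :: "nat \<Rightarrow> int"
  show "\<exists>c''. of_int z * (\<Sum>i<D. of_int (c i) * \<alpha> ^ i) = (\<Sum>i<D. of_int (c'' i) * \<alpha> ^ i)"
    by (rule exI[of _ "\<lambda>i. z * c i"]) (simp add: sum_distrib_left mult.assoc)
qed

lemma spanA_uminus: "x \<in> spanA \<alpha> D \<Longrightarrow> - x \<in> spanA \<alpha> D"
  using spanA_smult[of x \<alpha> D "-1"] by simp

lemma spanA_basis: "i < D \<Longrightarrow> \<alpha>^i \<in> spanA \<alpha> D"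
  unfolding spanA_def
proof (rule CollectI, rule exI[of _ "\<lambda>j. if j = i then 1 else 0"])
  assume "i < D"
  have "(\<Sum>j<D. of_int (if j = i then 1 else 0) * \<alpha> ^ j) = (\<Sum>j<D. if j = i then \<alpha> ^ j else 0)"
    by (intro sum.cong) auto
  also have "\<dots> = \<alpha>^i" using \<open>i < D\<close> by (simp add: sum.delta)
  finally show "\<alpha> ^ i = (\<Sum>j<D. of_int (if j = i then 1 else 0) * \<alpha> ^ j)" by simp
qed

lemma spanA_sum: "finite A \<Longrightarrow> (\<forall>i\<in>A. f i \<in> spanA \<alpha> D) \<Longrightarrow> sum f A \<in> spanA \<alpha> D"
  by (induction A rule: finite_induct) (auto intro: spanA_0 spanA_add)

lemma spanA_times_alpha:
  assumes top: "\<alpha>^D \<in> spanA \<alpha> D" and x: "x \<in> spanA \<alpha> D"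
  shows "\<alpha> * x \<in> spanA \<alpha> D"
proof -
  obtain c where c: "x = (\<Sum>i<D. of_int (c i) * \<alpha>^i)" using x unfolding spanA_def by auto
  have "\<alpha> * x = (\<Sum>i<D. of_int (c i) * \<alpha>^(Suc i))"
    unfolding c by (simp add: sum_distrib_left mult.assoc mult.left_commute)
  also have "\<dots> \<in> spanA \<alpha> D"
  proof (rule spanA_sum, simp, intro ballI)
    fix i assume "i \<in> {..<D}"
    then have "\<alpha>^(Suc i) \<in> spanA \<alpha> D"
      using top spanA_basis[of "Suc i" D \<alpha>] by (cases "Suc i = D") auto
    then show "of_int (c i) * \<alpha>^(Suc i) \<in> spanA \<alpha> D" by (rule spanA_smult)
  qed
  finally show ?thesis .
qed

lemma spanA_pow:
  assumes top: "\<alpha>^D \<in> spanA \<alpha> D"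
  shows "\<alpha>^e \<in> spanA \<alpha> D"
proof (induction e)
  case 0
  then show ?case using top spanA_basis[of 0 D \<alpha>] by (cases "D = 0") auto
next
  case (Suc e)
  then show ?case using spanA_times_alpha[OF top] by simp
qed

lemma of_int_mod_CHAR: "(of_int (k mod int CHAR('a)) :: 'a::comm_ring_1) = of_int k"
proof -
  have "k = k mod int CHAR('a) + int CHAR('a) * (k div int CHAR('a))" by simp
  then have "(of_int k :: 'a) = of_int (k mod int CHAR('a)) + of_nat CHAR('a) * of_int (k div int CHAR('a))"
    by (metis of_int_add of_int_mult of_int_of_nat_eq)
  then show ?thesis by simp
qed

lemma card_spanA:
  fixes \<alpha> :: "'a::{finite,field}"
  shows "card (spanA \<alpha> D) \<le> CHAR('a) ^ D"
proof -
  define p where "p = CHAR('a)"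
  have ppos: "0 < p" unfolding p_def by (rule finite_imp_CHAR_pos) simp
  define P where "P = (of_nat :: nat \<Rightarrow> 'a) ` {..<p}"
  have cP: "card P \<le> p" unfolding P_def using card_image_le[of "{..<p}"] by simp
  have inP: "of_int k \<in> P" for k
  proof -
    have "(of_int k :: 'a) = of_int (k mod int p)" unfolding p_def by (simp add: of_int_mod_CHAR)
    also have "\<dots> = of_nat (nat (k mod int p))" using ppos by simp
    finally show ?thesis unfolding P_def using ppos
      by (metis image_eqI lessThan_iff nat_less_iff of_nat_0_less_iff pos_mod_bound pos_mod_sign)
  qed
  have sub: "spanA \<alpha> D \<subseteq> (\<lambda>f. \<Sum>i<D. f i * \<alpha>^i) ` (PiE {..<D} (\<lambda>_. P))"
  proof
    fix x assume "x \<in> spanA \<alpha> D"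
    then obtain c where c: "x = (\<Sum>i<D. of_int (c i) * \<alpha>^i)" unfolding spanA_def by auto
    let ?f = "restrict (\<lambda>i. of_int (c i) :: 'a) {..<D}"
    have "?f \<in> PiE {..<D} (\<lambda>_. P)" using inP by auto
    moreover have "x = (\<Sum>i<D. ?f i * \<alpha>^i)" unfolding c by (intro sum.cong) auto
    ultimately show "x \<in> (\<lambda>f. \<Sum>i<D. f i * \<alpha>^i) ` (PiE {..<D} (\<lambda>_. P))" by blast
  qed
  have fP: "finite (PiE {..<D} (\<lambda>_. P))" by (intro finite_PiE) auto
  have "card (spanA \<alpha> D) \<le> card ((\<lambda>f. \<Sum>i<D. f i * \<alpha>^i) ` (PiE {..<D} (\<lambda>_. P)))"
    by (rule card_mono[OF finite_imageI[OF fP] sub])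
  also have "\<dots> \<le> card (PiE {..<D} (\<lambda>_. P))" by (rule card_image_le[OF fP])
  also have "\<dots> = card P ^ D" by (simp add: card_PiE)
  also have "\<dots> \<le> p ^ D" using cP by (rule power_mono) simp
  finally show ?thesis unfolding p_def .
qed

lemma field_card_bound:
  fixes \<alpha> :: "'a::{finite,field}"
  assumes prim: "primitive_element \<alpha>" and top: "\<alpha>^D \<in> spanA \<alpha> D"
  shows "card (UNIV :: 'a set) \<le> CHAR('a) ^ D"
proof -
  have "UNIV \<subseteq> spanA \<alpha> D"
  proof
    fix x :: 'a
    show "x \<in> spanA \<alpha> D"
    proof (cases "x = 0")
      case True then show ?thesis using spanA_0 by simp
    next
      case False
      then obtain e where "x = \<alpha>^e" using prim unfolding primitive_element_def by auto
      then show ?thesis using spanA_pow[OF top] by simp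
    qed
  qed
  then have "card (UNIV :: 'a set) \<le> card (spanA \<alpha> D)" by (intro card_mono) auto
  then show ?thesis using card_spanA[of \<alpha> D] by simp
qed




lemma valid_iff_gen:
  assumes M: "0 < M" and j: "j < M"
  shows "(- (int M * int a) \<le> int j - int M * int b) \<longleftrightarrow> b \<le> a"
proof
  assume h: "- (int M * int a) \<le> int j - int M * int b"
  show "b \<le> a"
  proof (rule ccontr)
    assume "\<not> b \<le> a"
    then have "int a + 1 \<le> int b" by simp
    then have "int M * (int a + 1) \<le> int M * int b" by (intro mult_left_mono) auto
    then show False using h j by (simp add: algebra_simps)
  qed
next
  assume "b \<le> a"
  then have "int M * int b \<le> int M * int a" by (intro mult_left_mono) auto
  then show "- (int M * int a) \<le> int j - int M * int b" by simp
qed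

lemma y_inj_gen:
  assumes M: "0 < M"
    and h: "int (c mod M) - int M * int (c div M) = int (c' mod M) - int M * int (c' div M)"
  shows "c = c'"
proof -
  have md: "(int (x mod M) - int M * int (x div M)) mod int M = int (x mod M)" for x
  proof -
    have "(int (x mod M) - int M * int (x div M)) mod int M = int (x mod M) mod int M"
      by (simp add: mod_diff_eq[symmetric])
    also have "\<dots> = int (x mod M)" using M by (simp add: of_nat_mod[symmetric])
    finally show ?thesis .
  qed
  have e1: "c mod M = c' mod M" using md[of c] md[of c'] h by simp
  then have "int M * int (c div M) = int M * int (c' div M)" using h by simp
  then have e2: "c div M = c' div M" using M by simp
  show ?thesis using e1 e2 by (metis div_mult_mod_eq)
qed

lemma exint_gen:
  assumes "c div M \<le> r div M"
  shows "int (M*(r div M - c div M) + r mod M + c mod M) = int r + (int (c mod M) - int M * int (c div M))"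
proof -
  have "int r = int M * int (r div M) + int (r mod M)"
    by (metis div_mult_mod_eq of_nat_add of_nat_mult mult.commute)
  moreover have "int (M*(r div M - c div M)) = int M * int (r div M) - int M * int (c div M)"
    using assms by (simp add: of_nat_diff right_diff_distrib)
  ultimately show ?thesis by simp
qed

lemma ex_bound_gen:
  fixes M r c :: nat
  assumes M: "0 < M"
  shows "M*(r div M - c div M) + r mod M + c mod M \<le> r + (M - 1)"
proof -
  have "M*(r div M - c div M) \<le> M * (r div M)" by (rule mult_le_mono2, rule diff_le_self)
  moreover have "c mod M \<le> M - 1" using mod_less_divisor[OF M, of c] by linarith
  moreover have "M * (r div M) + r mod M = r" by simp
  ultimately show ?thesis by linarith
qed

lemma pow_ineq:
  assumes "0 < d" "0 < h"
  shows "(2::nat)^(A+h) + 2^(A+d) < 2^A + 2^(A+d+h)"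
proof -
  have a: "(2::int)^d \<ge> 2" and b: "(2::int)^h \<ge> 2" using assms
    by (metis One_nat_def Suc_leI power_increasing power_one_right one_le_numeral)+
  have "0 < ((2::int)^d - 1) * (2^h - 1)" using a b by (intro mult_pos_pos) auto
  then have "(2::int)^h + 2^d < 1 + 2^d * 2^h" by (simp add: algebra_simps)
  then have "(2::int)^A * (2^h + 2^d) < 2^A * (1 + 2^d * 2^h)" by (intro mult_strict_left_mono) auto
  then have "(2::int)^(A+h) + 2^(A+d) < 2^A + 2^(A+d+h)" by (simp add: power_add algebra_simps)
  then show ?thesis by (metis (mono_tags) of_nat_less_iff of_nat_add of_nat_power of_nat_numeral)
qed

lemma geom_sum2: "(\<Sum>r<n. (2::nat)^r) < 2^n"
  by (induction n) auto





lemma main_det: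
  fixes \<alpha> :: "'a::{finite,field}" and M L :: nat and I J :: "nat set"
  defines "B \<equiv> block_toeplitz (T_block \<alpha> M) M L"
  assumes M: "0 < M" and prim: "primitive_element \<alpha>"
    and cardF: "CHAR('a) ^ (2^(M*(L+2)-1)) \<le> card (UNIV::'a set)"
    and I: "I \<subseteq> {0..<(L+1)*M}" and J: "J \<subseteq> {0..<(L+1)*M}" and cIJ: "card I = card J"
    and nt: "\<not> trivial_minor (submatrix B I J)"
  shows "det (submatrix B I J) \<noteq> 0"
proof
  assume det0: "det (submatrix B I J) = 0"
  define n0 where "n0 = (L+1)*M"
  define S where "S = submatrix B I J"
  define m where "m = card I"
  have dB: "dim_row B = n0" "dim_col B = n0" unfolding B_def block_toeplitz_def n0_def by auto
  have setI: "{i. i < n0 \<and> i \<in> I} = I" using I unfolding n0_def by auto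
  have setJ: "{i. i < n0 \<and> i \<in> J} = J" using J unfolding n0_def by auto
  have dS: "dim_row S = m" "dim_col S = m" unfolding S_def m_def
    using dim_submatrix[of B I J] dB setI setJ cIJ by auto
  have finI: "finite I" using I finite_subset by blast
  have finJ: "finite J" using J finite_subset by blast
  define R where "R = pick I"
  define C where "C = pick J"
  have Rlt: "R i < n0" if "i < m" for i
    using pick_in_set[of i I] that I unfolding R_def m_def n0_def by auto
  have Clt: "C i < n0" if "i < m" for i
    using pick_in_set[of i J] that J cIJ unfolding C_def m_def n0_def by auto
  have Rmono: "R i < R i'" if "i < i'" "i' < m" for i i'
    using pick_mono[of i' I i] that unfolding R_def m_def by auto
  have Cmono: "C i < C i'" if "i < i'" "i' < m" for i i'
    using pick_mono[of i' J i] that cIJ unfolding C_def m_def by auto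
  define ex where "ex = (\<lambda>r c. M*(r div M - c div M) + r mod M + c mod M)"
  have Bidx: "B $$ (r,c) = (if c div M \<le> r div M then \<alpha>^(2^(ex r c)) else 0)"
    if "r < n0" "c < n0" for r c
    using that M unfolding B_def block_toeplitz_def T_block_def ex_def n0_def by simp
  have Sidx: "S $$ (i,j) = B $$ (R i, C j)" if "i < m" "j < m" for i j
    unfolding S_def R_def C_def using submatrix_index[of i B I j J] that dB setI setJ cIJ m_def by simp
  define y where "y = (\<lambda>j. int (C j mod M) - int M * int (C j div M))"
  define t where "t = (\<lambda>i. - (int M * int (R i div M)))"
  have valid_iff: "t i \<le> y j \<longleftrightarrow> C j div M \<le> R i div M" for i j
    unfolding t_def y_def using valid_iff_gen[OF M, of "C j mod M" "R i div M" "C j div M"] M by simp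
  have exint: "int (ex (R i) (C j)) = int (R i) + y j" if "C j div M \<le> R i div M" for i j
    unfolding ex_def y_def using exint_gen[OF that] .
  define w where "w = (\<lambda>i j. (2::nat)^(ex (R i) (C j)))"
  have yinj: "inj_on y {0..<m}"
  proof (rule inj_onI)
    fix j j' assume "j \<in> {0..<m}" "j' \<in> {0..<m}" "y j = y j'"
    then have "C j = C j'" using y_inj_gen[OF M] unfolding y_def by blast
    then show "j = j'" using Cmono \<open>j \<in> {0..<m}\<close> \<open>j' \<in> {0..<m}\<close>
      by (metis atLeastLessThan_iff less_irrefl nat_neq_iff)
  qed
  have swap: "w i j + w i' j' < w i j' + w i' j"
    if "i < i'" "i' < m" "j < m" "j' < m" "y j' < y j" "t i \<le> y j'" "t i' \<le> y j'" for i i' j j'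
  proof -
    have v1: "C j' div M \<le> R i div M" "C j' div M \<le> R i' div M" "C j div M \<le> R i div M" "C j div M \<le> R i' div M"
    proof -
      have tj: "t i \<le> y j" "t i' \<le> y j" using that(5,6,7) by auto
      show "C j' div M \<le> R i div M" "C j' div M \<le> R i' div M" "C j div M \<le> R i div M" "C j div M \<le> R i' div M"
        using valid_iff[of i j'] valid_iff[of i' j'] valid_iff[of i j] valid_iff[of i' j] that(6,7) tj by auto
    qed
    define A where "A = ex (R i) (C j')"
    define d where "d = R i' - R i"
    define h where "h = nat (y j - y j')"
    have dpos: "0 < d" using Rmono[OF that(1,2)] unfolding d_def by simp
    have hpos: "0 < h" using that(5) unfolding h_def by simp
    have e1: "ex (R i) (C j) = A + h" using exint[OF v1(1)] exint[OF v1(3)] that(5) unfolding A_def h_def by linarith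
    have e2: "ex (R i') (C j') = A + d" using exint[OF v1(1)] exint[OF v1(2)] Rmono[OF that(1,2)] unfolding A_def d_def by linarith
    have e3: "ex (R i') (C j) = A + d + h" using exint[OF v1(1)] exint[OF v1(4)] Rmono[OF that(1,2)] that(5)
      unfolding A_def d_def h_def by linarith
    show ?thesis unfolding w_def e1 e2 e3 A_def[symmetric] using pow_ineq[OF dpos hpos, of A] by simp
  qed
  obtain \<sigma>0 where s0: "\<sigma>0 permutes {0..<m}" "\<forall>i<m. S $$ (i, \<sigma>0 i) \<noteq> 0"
    using nt unfolding trivial_minor_def S_def[symmetric] dS by auto
  have v0: "\<forall>i<m. t i \<le> y (\<sigma>0 i)"
  proof (intro allI impI)
    fix i assume i: "i < m"
    then have "\<sigma>0 i < m" using s0(1) by (auto simp: permutes_in_image)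
    then show "t i \<le> y (\<sigma>0 i)" using s0(2) i Sidx Bidx Rlt Clt valid_iff by (metis)
  qed
  obtain \<sigma> where sp: "\<sigma> permutes {0..<m}" and sv: "\<forall>i<m. t i \<le> y (\<sigma> i)"
    and smax: "\<forall>\<tau>. \<tau> permutes {0..<m} \<and> (\<forall>i<m. t i \<le> y (\<tau> i)) \<and> \<tau> \<noteq> \<sigma> \<longrightarrow>
         (\<Sum>i=0..<m. w i (\<tau> i)) < (\<Sum>i=0..<m. w i (\<sigma> i))"
    using unique_max_perm[where y=y and t=t and w=w and m=m, OF yinj swap s0(1) v0] by blast
  define E where "E = (\<lambda>p. (\<Sum>i=0..<m. w i (p i)))"
  define V where "V = {p. p permutes {0..<m} \<and> (\<forall>i<m. t i \<le> y (p i))}"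
  have finP: "finite {p. p permutes {0..<m}}" by (rule finite_permutations) simp
  have prod_eq: "(\<Prod>i=0..<m. S $$ (i, p i)) = (if \<forall>i<m. t i \<le> y (p i) then \<alpha>^(E p) else 0)"
    if pp: "p permutes {0..<m}" for p
  proof (cases "\<forall>i<m. t i \<le> y (p i)")
    case True
    have "(\<Prod>i=0..<m. S $$ (i, p i)) = (\<Prod>i=0..<m. \<alpha>^(w i (p i)))"
    proof (rule prod.cong[OF refl])
      fix i assume "i \<in> {0..<m}"
      then have i: "i < m" and pi: "p i < m" using pp by (auto simp: permutes_in_image)
      show "S $$ (i, p i) = \<alpha>^(w i (p i))"
        using Sidx[OF i pi] Bidx[OF Rlt[OF i] Clt[OF pi]] True i valid_iff unfolding w_def by simp
    qed
    also have "\<dots> = \<alpha>^(E p)" unfolding E_def by (simp add: power_sum)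
    finally show ?thesis using True by simp
  next
    case False
    then obtain i where i: "i < m" and ni: "\<not> t i \<le> y (p i)" by auto
    have pi: "p i < m" using pp i by (auto simp: permutes_in_image)
    have "S $$ (i, p i) = 0" using Sidx[OF i pi] Bidx[OF Rlt[OF i] Clt[OF pi]] ni valid_iff by simp
    then have z: "(\<Prod>i=0..<m. S $$ (i, p i)) = 0" using i by (intro prod_zero) auto
    show ?thesis by (simp only: if_not_P[OF False] z)
  qed
  have det_eq: "det S = (\<Sum>p\<in>V. of_int (sign p) * \<alpha>^(E p))"
  proof -
    have "det S = (\<Sum>p\<in>{p. p permutes {0..<m}}. of_int (sign p) * (\<Prod>i=0..<m. S $$ (i, p i)))"
      unfolding det_def dS by simp
    also have "\<dots> = (\<Sum>p\<in>{p. p permutes {0..<m}}. if \<forall>i<m. t i \<le> y (p i) then of_int (sign p) * \<alpha>^(E p) else 0)"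
    proof (intro sum.cong refl)
      fix p assume "p \<in> {p. p permutes {0..<m}}"
      then have pp: "p permutes {0..<m}" by simp
      show "of_int (sign p) * (\<Prod>i=0..<m. S $$ (i, p i)) = (if \<forall>i<m. t i \<le> y (p i) then of_int (sign p) * \<alpha>^(E p) else 0)"
      proof (cases "\<forall>i<m. t i \<le> y (p i)")
        case True
        have "(\<Prod>i=0..<m. S $$ (i, p i)) = \<alpha>^(E p)" using prod_eq[OF pp] by (simp only: if_P[OF True])
        then show ?thesis by (simp only: if_P[OF True])
      next
        case False
        have "(\<Prod>i=0..<m. S $$ (i, p i)) = 0" using prod_eq[OF pp] by (simp only: if_not_P[OF False])
        then show ?thesis by (simp only: if_not_P[OF False] mult_zero_right)
      qed
    qed
    also have "\<dots> = (\<Sum>p\<in>V. of_int (sign p) * \<alpha>^(E p))"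
      unfolding V_def using sum.inter_filter[OF finP, of "\<lambda>p. of_int (sign p) * \<alpha>^(E p)" "\<lambda>p. \<forall>i<m. t i \<le> y (p i)"]
      by (simp add: Collect_conj_eq[symmetric] conj_commute)
    finally show ?thesis .
  qed
  have finV: "finite V" unfolding V_def by (rule finite_subset[OF _ finP]) auto
  have sV: "\<sigma> \<in> V" unfolding V_def using sp sv by simp
  have "det S = of_int (sign \<sigma>) * \<alpha>^(E \<sigma>) + (\<Sum>p\<in>V - {\<sigma>}. of_int (sign p) * \<alpha>^(E p))"
    unfolding det_eq using sum.remove[OF finV sV] by simp
  then have eq0: "of_int (sign \<sigma>) * \<alpha>^(E \<sigma>) + (\<Sum>p\<in>V - {\<sigma>}. of_int (sign p) * \<alpha>^(E p)) = 0"
    using det0 unfolding S_def by simp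
  have sq: "(of_int (sign \<sigma>) :: 'a) * of_int (sign \<sigma>) = 1"
    by (cases \<sigma> rule: sign_cases) simp_all
  have top: "\<alpha>^(E \<sigma>) = - (of_int (sign \<sigma>) * (\<Sum>p\<in>V - {\<sigma>}. of_int (sign p) * \<alpha>^(E p)))"
  proof -
    have "of_int (sign \<sigma>) * (of_int (sign \<sigma>) * \<alpha>^(E \<sigma>) + (\<Sum>p\<in>V - {\<sigma>}. of_int (sign p) * \<alpha>^(E p))) = 0"
      using eq0 by simp
    then have "of_int (sign \<sigma>) * (of_int (sign \<sigma>) * \<alpha>^(E \<sigma>)) + of_int (sign \<sigma>) * (\<Sum>p\<in>V - {\<sigma>}. of_int (sign p) * \<alpha>^(E p)) = 0"
      by (simp only: distrib_left)
    moreover have "of_int (sign \<sigma>) * (of_int (sign \<sigma>) * \<alpha>^(E \<sigma>)) = \<alpha>^(E \<sigma>)"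
      using sq by (metis mult.assoc mult_1)
    ultimately have "\<alpha>^(E \<sigma>) + of_int (sign \<sigma>) * (\<Sum>p\<in>V - {\<sigma>}. of_int (sign p) * \<alpha>^(E p)) = 0" by simp
    then show ?thesis by (simp add: eq_neg_iff_add_eq_0)
  qed
  have "\<alpha>^(E \<sigma>) \<in> spanA \<alpha> (E \<sigma>)"
    unfolding top
  proof (intro spanA_uminus spanA_smult spanA_sum ballI)
    show "finite (V - {\<sigma>})" using finV by simp
    fix p assume p: "p \<in> V - {\<sigma>}"
    then have "E p < E \<sigma>" using smax unfolding V_def E_def by auto
    then show "\<alpha>^(E p) \<in> spanA \<alpha> (E \<sigma>)" by (rule spanA_basis)
  qed
  then have cardle: "card (UNIV::'a set) \<le> CHAR('a) ^ (E \<sigma>)" by (rule field_card_bound[OF prim])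
  have Ebound: "E \<sigma> < 2^(M*(L+2)-1)"
  proof -
    have "E \<sigma> \<le> (\<Sum>i=0..<m. 2^(R i + (M - 1)))"
      unfolding E_def w_def
    proof (intro sum_mono power_increasing)
      fix i assume "i \<in> {0..<m}"
      show "ex (R i) (C (\<sigma> i)) \<le> R i + (M - 1)" unfolding ex_def by (rule ex_bound_gen[OF M])
    qed simp
    also have "\<dots> = 2^(M-1) * (\<Sum>i=0..<m. 2^(R i))"
      by (simp add: sum_distrib_left power_add mult.commute)
    also have "(\<Sum>i=0..<m. (2::nat)^(R i)) = (\<Sum>r\<in>R ` {0..<m}. 2^r)"
    proof -
      have "inj_on R {0..<m}" using Rmono by (intro inj_onI) (metis atLeastLessThan_iff less_irrefl nat_neq_iff)
      then show ?thesis by (simp add: sum.reindex)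
    qed
    also have "\<dots> \<le> (\<Sum>r<n0. 2^r)"
      by (intro sum_mono2) (auto simp: Rlt)
    also have "(2::nat)^(M-1) * (\<Sum>r<n0. 2^r) < 2^(M-1) * 2^n0"
      using geom_sum2[of n0] by simp
    also have "\<dots> = 2^(M*(L+2)-1)"
    proof -
      have "M - 1 + n0 = M*(L+2) - 1" unfolding n0_def using M by (simp add: algebra_simps)
      then show ?thesis by (simp add: power_add[symmetric])
    qed
    finally show ?thesis by simp
  qed
  have "0 < CHAR('a)" by (rule finite_imp_CHAR_pos) simp
  then have "prime CHAR('a)" by (rule prime_CHAR_semidom)
  then have p2: "1 < CHAR('a)" by (rule prime_gt_1_nat)
  have "CHAR('a) ^ (E \<sigma>) < CHAR('a) ^ (2^(M*(L+2)-1))" using Ebound p2 by (simp add: power_strict_increasing_iff)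
  then show False using cardle cardF by simp
qed


theorem theorem3p2:
  fixes n k \<delta> :: nat and \<alpha> :: "'a::{finite,field}"
  assumes "0 < n" "0 < k" "0 < \<delta>" "k < n" "(n - k) dvd \<delta>"
    and "primitive_element \<alpha>"
    and "card (UNIV :: 'a set) \<ge>
           CHAR('a) ^ (2 ^ (max (n - k) k * (\<delta> div k + \<delta> div (n - k) + 2) - 1))"
  shows "superregular (block_toeplitz (T_block \<alpha> (max (n - k) k)) (max (n - k) k)
                         (\<delta> div k + \<delta> div (n - k)))"
proof -
  define M where "M = max (n - k) k"
  define L where "L = \<delta> div k + \<delta> div (n - k)"
  have M: "0 < M" unfolding M_def using assms(2) by simp
  have cardF: "CHAR('a) ^ (2^(M*(L+2)-1)) \<le> card (UNIV::'a set)"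
    using assms(7) unfolding M_def L_def by simp
  have dB: "dim_row (block_toeplitz (T_block \<alpha> M) M L) = (L+1)*M"
           "dim_col (block_toeplitz (T_block \<alpha> M) M L) = (L+1)*M"
    unfolding block_toeplitz_def by auto
  have "superregular (block_toeplitz (T_block \<alpha> M) M L)"
    unfolding superregular_def
  proof (intro allI impI)
    fix I J
    assume "I \<subseteq> {0..<dim_row (block_toeplitz (T_block \<alpha> M) M L)}"
      "J \<subseteq> {0..<dim_col (block_toeplitz (T_block \<alpha> M) M L)}" "card I = card J"
      "\<not> trivial_minor (submatrix (block_toeplitz (T_block \<alpha> M) M L) I J)"
    then show "det (submatrix (block_toeplitz (T_block \<alpha> M) M L) I J) \<noteq> 0"
      using main_det[OF M assms(6) cardF] dB by simp
  qed
  then show ?thesis unfolding M_def L_def .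
qed

end
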